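(* Let $G=(V=V_0\uplus V_1, v_{\mathsf{init}}, E,\gamma)$ be a quantitative graph game and let $d=\frac{p}{q}>1$ be the discount factor, with $p,q$ positive integers. Then the optimal cost $W$ of the game is a rational number with denominator at most $(p^{|V|}-q^{|V|})\cdot p^{|V|}$.
   Context: A quantitative graph game $G=(V=V_0\uplus V_1, v_{\mathsf{init}},E,\gamma)$ consists of a finite directed graph $(V,E)$ in which every state has at least one outgoing edge, a partition of $V$ into $V_0$ (states of the maximizing player $P_0$) and $V_1$ (states of the minimizing player $P_1$), an initial state $v_{\mathsf{init}}$, and an integer cost function $\gamma:E\to\mathbb{Z}$. A play is an infinite path $v_0v_1\dots$ with $v_0=v_{\mathsf{init}}$, where the player owning the current state chooses the successor; its cost with discount factor $d>1$ is $\sum_{k\ge0}\gamma(v_k,v_{k+1})/d^{k}$. Define $\mathit{wt}_1(v)=\max\{\gamma(v,w):(v,w)\in E\}$ if $v\in V_0$ and $\min\{\gamma(v,w):(v,w)\in E\}$ if $v\in V_1$, and $\mathit{wt}_{k+1}(v)=\max\{\gamma(v,w)+\frac1d\mathit{wt}_k(w):(v,w)\in E\}$ if $v\in V_0$, with $\min$ instead of $\max$ if $v\in V_1$. The optimal cost is $W=\lim_{k\to\infty}\mathit{wt}_k(v_{\mathsf{init}})$. *)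

theory Defs
  imports Complex_Main
begin

definition graph_game :: "'v set \<Rightarrow> 'v set \<Rightarrow> 'v \<Rightarrow> ('v \<times> 'v) set \<Rightarrow> bool" where
  "graph_game V V0 vinit E \<longleftrightarrow>
     finite V \<and> V0 \<subseteq> V \<and> vinit \<in> V \<and> E \<subseteq> V \<times> V \<and>
     (\<forall>v\<in>V. \<exists>w. (v, w) \<in> E)"

text \<open>wt V0 E gamma d k v is the paper's wt_k(v) for k >= 1 (the value at k = 0 is unused).\<close>

fun wt :: "'v set \<Rightarrow> ('v \<times> 'v) set \<Rightarrow> ('v \<times> 'v \<Rightarrow> int) \<Rightarrow> real \<Rightarrow> nat \<Rightarrow> 'v \<Rightarrow> real" where
  "wt V0 E \<gamma> d 0 v = 0"
| "wt V0 E \<gamma> d (Suc 0) v =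
     (if v \<in> V0 then Max ((\<lambda>w. real_of_int (\<gamma> (v, w))) ` {w. (v, w) \<in> E})
      else Min ((\<lambda>w. real_of_int (\<gamma> (v, w))) ` {w. (v, w) \<in> E}))"
| "wt V0 E \<gamma> d (Suc (Suc k)) v =
     (if v \<in> V0 then Max ((\<lambda>w. real_of_int (\<gamma> (v, w)) + wt V0 E \<gamma> d (Suc k) w / d) ` {w. (v, w) \<in> E})
      else Min ((\<lambda>w. real_of_int (\<gamma> (v, w)) + wt V0 E \<gamma> d (Suc k) w / d) ` {w. (v, w) \<in> E}))"

definition optimal_cost :: "'v set \<Rightarrow> 'v \<Rightarrow> ('v \<times> 'v) set \<Rightarrow> ('v \<times> 'v \<Rightarrow> int) \<Rightarrow> real \<Rightarrow> real" where
  "optimal_cost V0 vinit E \<gamma> d = lim (\<lambda>k. wt V0 E \<gamma> d k vinit)"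

end

theory Submission
  imports Defs
begin

definition bellman :: "'v set \<Rightarrow> ('v \<times> 'v) set \<Rightarrow> ('v \<times> 'v \<Rightarrow> int) \<Rightarrow> real \<Rightarrow> ('v \<Rightarrow> real) \<Rightarrow> 'v \<Rightarrow> real" where
  "bellman V0 E \<gamma> d f v =
     (if v \<in> V0 then Max ((\<lambda>w. real_of_int (\<gamma> (v, w)) + f w / d) ` {w. (v, w) \<in> E})
      else Min ((\<lambda>w. real_of_int (\<gamma> (v, w)) + f w / d) ` {w. (v, w) \<in> E}))"

lemma wt_Suc: "wt V0 E \<gamma> d (Suc k) v = bellman V0 E \<gamma> d (wt V0 E \<gamma> d k) v"
  by (cases k) (simp_all add: bellman_def)

lemma Max_diff:
  fixes f g :: "'a \<Rightarrow> real"
  assumes "finite S" "S \<noteq> {}" "\<forall>s\<in>S. \<bar>f s - g s\<bar> \<le> c"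
  shows "\<bar>Max (f ` S) - Max (g ` S)\<bar> \<le> c"
proof -
  have "Max (f ` S) \<in> f ` S" using assms by (intro Max_in) auto
  then obtain a where a: "a \<in> S" "Max (f ` S) = f a" by auto
  have "Max (g ` S) \<in> g ` S" using assms by (intro Max_in) auto
  then obtain b where b: "b \<in> S" "Max (g ` S) = g b" by auto
  have "g a \<le> g b" using a b assms by (metis Max_ge finite_imageI image_eqI)
  moreover have "f b \<le> f a" using a b assms by (metis Max_ge finite_imageI image_eqI)
  moreover have "\<bar>f a - g a\<bar> \<le> c" "\<bar>f b - g b\<bar> \<le> c" using a b assms by auto
  ultimately show ?thesis using a b by (simp add: abs_le_iff)
qed

lemma Min_diff:
  fixes f g :: "'a \<Rightarrow> real"
  assumes "finite S" "S \<noteq> {}" "\<forall>s\<in>S. \<bar>f s - g s\<bar> \<le> c"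
  shows "\<bar>Min (f ` S) - Min (g ` S)\<bar> \<le> c"
proof -
  have "Min (f ` S) \<in> f ` S" using assms by (intro Min_in) auto
  then obtain a where a: "a \<in> S" "Min (f ` S) = f a" by auto
  have "Min (g ` S) \<in> g ` S" using assms by (intro Min_in) auto
  then obtain b where b: "b \<in> S" "Min (g ` S) = g b" by auto
  have "g b \<le> g a" using a b assms by (metis Min_le finite_imageI image_eqI)
  moreover have "f a \<le> f b" using a b assms by (metis Min_le finite_imageI image_eqI)
  moreover have "\<bar>f a - g a\<bar> \<le> c" "\<bar>f b - g b\<bar> \<le> c" using a b assms by auto
  ultimately show ?thesis using a b by (simp add: abs_le_iff)
qed

lemma bellman_diff:
  assumes "finite {w. (v, w) \<in> E}" "{w. (v, w) \<in> E} \<noteq> {}"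
    and "\<forall>w. (v, w) \<in> E \<longrightarrow> \<bar>f w - g w\<bar> \<le> c" and "d > 0"
  shows "\<bar>bellman V0 E \<gamma> d f v - bellman V0 E \<gamma> d g v\<bar> \<le> c / d"
proof -
  have h: "\<forall>w\<in>{w. (v, w) \<in> E}. \<bar>(real_of_int (\<gamma> (v, w)) + f w / d) - (real_of_int (\<gamma> (v, w)) + g w / d)\<bar> \<le> c / d"
  proof
    fix w assume "w \<in> {w. (v, w) \<in> E}"
    then have "\<bar>f w - g w\<bar> \<le> c" using assms by auto
    moreover have "\<bar>(real_of_int (\<gamma> (v, w)) + f w / d) - (real_of_int (\<gamma> (v, w)) + g w / d)\<bar> = \<bar>f w - g w\<bar> / d"
      using assms(4) by (simp add: diff_divide_distrib[symmetric])
    ultimately show "\<bar>(real_of_int (\<gamma> (v, w)) + f w / d) - (real_of_int (\<gamma> (v, w)) + g w / d)\<bar> \<le> c / d"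
      using assms(4) by (simp add: divide_right_mono)
  qed
  show ?thesis unfolding bellman_def
    using Max_diff[OF assms(1,2) h] Min_diff[OF assms(1,2) h] by auto
qed

lemma succ_props:
  assumes "graph_game V V0 vinit E" "v \<in> V"
  shows "finite {w. (v, w) \<in> E}" "{w. (v, w) \<in> E} \<noteq> {}" "{w. (v, w) \<in> E} \<subseteq> V"
  using assms unfolding graph_game_def
  by (auto intro: finite_subset[of _ V])

lemma wt_diff_bound:
  assumes gg: "graph_game V V0 vinit E" and d: "d > 1"
  shows "v \<in> V \<Longrightarrow> \<bar>wt V0 E \<gamma> d (Suc k) v - wt V0 E \<gamma> d k v\<bar>
           \<le> (\<Sum>w\<in>V. \<bar>wt V0 E \<gamma> d (Suc 0) w\<bar>) / d ^ k"
proof (induction k arbitrary: v)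
  case 0
  have "finite V" using gg unfolding graph_game_def by auto
  then show ?case using 0 member_le_sum[of v V "\<lambda>w. \<bar>wt V0 E \<gamma> d (Suc 0) w\<bar>"]
    by (simp del: wt.simps add: wt.simps(1))
next
  case (Suc k)
  let ?M = "(\<Sum>w\<in>V. \<bar>wt V0 E \<gamma> d (Suc 0) w\<bar>)"
  have "\<forall>w. (v, w) \<in> E \<longrightarrow> \<bar>wt V0 E \<gamma> d (Suc k) w - wt V0 E \<gamma> d k w\<bar> \<le> ?M / d ^ k"
    using Suc succ_props(3)[OF gg Suc.prems] by auto
  then have "\<bar>bellman V0 E \<gamma> d (wt V0 E \<gamma> d (Suc k)) v - bellman V0 E \<gamma> d (wt V0 E \<gamma> d k) v\<bar> \<le> (?M / d ^ k) / d"
    using d by (intro bellman_diff succ_props[OF gg Suc.prems]) auto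
  then show ?case by (simp add: wt_Suc[of _ _ _ _ "Suc k"] wt_Suc[of _ _ _ _ k] mult.commute del: wt.simps)
qed

lemma wt_conv:
  assumes gg: "graph_game V V0 vinit E" and d: "d > 1" and v: "v \<in> V"
  shows "convergent (\<lambda>k. wt V0 E \<gamma> d k v)"
proof -
  let ?M = "(\<Sum>w\<in>V. \<bar>wt V0 E \<gamma> d (Suc 0) w\<bar>)"
  define f where "f i = wt V0 E \<gamma> d (Suc i) v - wt V0 E \<gamma> d i v" for i
  have sg: "summable (\<lambda>i. ?M * (1 / d) ^ i)"
    using d by (intro summable_mult summable_geometric) (simp del: wt.simps)
  have nb: "norm (f i) \<le> ?M * (1 / d) ^ i" for i
  proof -
    have e: "?M * (1 / d) ^ i = ?M / d ^ i" by (simp only: power_one_over times_divide_eq_right mult_1_right)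
    show ?thesis unfolding f_def real_norm_def e by (rule wt_diff_bound[OF gg d v])
  qed
  have "summable f" by (rule summable_comparison_test'[OF sg nb])
  then have lim1: "(\<lambda>n. \<Sum>i<n. f i) \<longlonglongrightarrow> suminf f" by (rule summable_LIMSEQ)
  have tl: "(\<Sum>i<n. f i) = wt V0 E \<gamma> d n v - wt V0 E \<gamma> d 0 v" for n
    unfolding f_def by (rule sum_lessThan_telescope[where f="\<lambda>i. wt V0 E \<gamma> d i v"])
  have eqf: "(\<lambda>n. \<Sum>i<n. f i) = (\<lambda>n. wt V0 E \<gamma> d n v)"
    by (intro ext) (simp only: tl wt.simps(1) diff_zero)
  have "(\<lambda>n. wt V0 E \<gamma> d n v) \<longlonglongrightarrow> suminf f" using lim1 unfolding eqf .
  then show ?thesis unfolding convergent_def by (rule exI)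
qed

lemma fixpoint:
  assumes gg: "graph_game V V0 vinit E" and d: "d > 1"
    and x_def: "x = (\<lambda>v. lim (\<lambda>k. wt V0 E \<gamma> d k v))" and v: "v \<in> V"
  shows "x v = bellman V0 E \<gamma> d x v"
proof -
  have fin: "finite V" using gg unfolding graph_game_def by auto
  have conv: "(\<lambda>k. wt V0 E \<gamma> d k w) \<longlonglongrightarrow> x w" if "w \<in> V" for w
    using wt_conv[OF gg d that] unfolding x_def by (simp add: convergent_LIMSEQ_iff)
  have "(\<lambda>k. \<Sum>w\<in>V. \<bar>wt V0 E \<gamma> d k w - x w\<bar>) \<longlonglongrightarrow> (\<Sum>w\<in>V. \<bar>x w - x w\<bar>)"
    by (intro tendsto_intros conv)
  then have "(\<lambda>k. \<Sum>w\<in>V. \<bar>wt V0 E \<gamma> d k w - x w\<bar>) \<longlonglongrightarrow> 0" by simp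
  then have g0: "(\<lambda>k. (\<Sum>w\<in>V. \<bar>wt V0 E \<gamma> d k w - x w\<bar>) / d) \<longlonglongrightarrow> 0"
    by (rule tendsto_divide_zero)
  have bd: "\<bar>bellman V0 E \<gamma> d (wt V0 E \<gamma> d k) v - bellman V0 E \<gamma> d x v\<bar>
      \<le> (\<Sum>w\<in>V. \<bar>wt V0 E \<gamma> d k w - x w\<bar>) / d" for k
  proof (rule bellman_diff[OF succ_props(1,2)[OF gg v]])
    show "\<forall>w. (v, w) \<in> E \<longrightarrow> \<bar>wt V0 E \<gamma> d k w - x w\<bar> \<le> (\<Sum>w\<in>V. \<bar>wt V0 E \<gamma> d k w - x w\<bar>)"
      using succ_props(3)[OF gg v] fin by (auto intro: member_le_sum)
    show "d > 0" using d by simp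
  qed
  have "(\<lambda>k. bellman V0 E \<gamma> d (wt V0 E \<gamma> d k) v - bellman V0 E \<gamma> d x v) \<longlonglongrightarrow> 0"
  proof (rule tendsto_0_le[OF g0, where K=1])
    show "\<forall>\<^sub>F k in sequentially. norm (bellman V0 E \<gamma> d (wt V0 E \<gamma> d k) v - bellman V0 E \<gamma> d x v)
        \<le> norm ((\<Sum>w\<in>V. \<bar>wt V0 E \<gamma> d k w - x w\<bar>) / d) * 1"
      using bd by (intro always_eventually allI) (smt (verit) real_norm_def)
  qed
  then have "(\<lambda>k. bellman V0 E \<gamma> d (wt V0 E \<gamma> d k) v) \<longlonglongrightarrow> bellman V0 E \<gamma> d x v"
    by (rule LIM_zero_cancel)
  then have "(\<lambda>k. wt V0 E \<gamma> d (Suc k) v) \<longlonglongrightarrow> bellman V0 E \<gamma> d x v"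
    by (simp only: wt_Suc)
  moreover have "(\<lambda>k. wt V0 E \<gamma> d (Suc k) v) \<longlonglongrightarrow> x v"
    using conv[OF v] by (rule LIMSEQ_Suc)
  ultimately show ?thesis using LIMSEQ_unique by blast
qed

lemma choose_succ:
  assumes gg: "graph_game V V0 vinit E" and v: "v \<in> V" and fx: "x v = bellman V0 E \<gamma> d x v"
  shows "\<exists>w. (v, w) \<in> E \<and> x v = real_of_int (\<gamma> (v, w)) + x w / d"
proof -
  let ?S = "{w. (v, w) \<in> E}"
  let ?F = "\<lambda>w. real_of_int (\<gamma> (v, w)) + x w / d"
  have ne: "?F ` ?S \<noteq> {}" and fi: "finite (?F ` ?S)" using succ_props[OF gg v] by auto
  have "bellman V0 E \<gamma> d x v \<in> ?F ` ?S"
    unfolding bellman_def using Max_in[OF fi ne] Min_in[OF fi ne] by auto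
  then show ?thesis using fx by auto
qed

lemma path:
  assumes sig: "\<forall>v\<in>V. (v, \<sigma> v) \<in> E \<and> \<sigma> v \<in> V \<and> x v = real_of_int (\<gamma> (v, \<sigma> v)) + x (\<sigma> v) / d"
    and v: "v \<in> V" and d: "d \<noteq> 0"
  shows "(\<sigma> ^^ m) v \<in> V \<and> x v = (\<Sum>t<m. real_of_int (\<gamma> ((\<sigma> ^^ t) v, (\<sigma> ^^ Suc t) v)) / d ^ t) + x ((\<sigma> ^^ m) v) / d ^ m"
proof (induction m)
  case 0
  then show ?case using v by simp
next
  case (Suc m)
  define u where "u = (\<sigma> ^^ m) v"
  have u: "u \<in> V" using Suc u_def by simp
  have su: "(\<sigma> ^^ Suc m) v = \<sigma> u" by (simp add: u_def)
  have xu: "x u = real_of_int (\<gamma> (u, \<sigma> u)) + x (\<sigma> u) / d" using sig u by auto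
  have "x u / d ^ m = real_of_int (\<gamma> (u, \<sigma> u)) / d ^ m + x (\<sigma> u) / d ^ Suc m"
    using d by (simp add: xu add_divide_distrib)
  moreover have IH: "x v = (\<Sum>t<m. real_of_int (\<gamma> ((\<sigma> ^^ t) v, (\<sigma> ^^ Suc t) v)) / d ^ t) + x u / d ^ m"
    using Suc.IH unfolding u_def by blast
  moreover have "(\<Sum>t<Suc m. real_of_int (\<gamma> ((\<sigma> ^^ t) v, (\<sigma> ^^ Suc t) v)) / d ^ t)
     = (\<Sum>t<m. real_of_int (\<gamma> ((\<sigma> ^^ t) v, (\<sigma> ^^ Suc t) v)) / d ^ t) + real_of_int (\<gamma> (u, \<sigma> u)) / d ^ m"
    by (simp add: u_def)
  moreover have "(\<sigma> ^^ Suc m) v \<in> V" using su sig u by auto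
  ultimately show ?case unfolding su by linarith
qed

lemma rat_sum:
  fixes p q :: nat and g :: "nat \<Rightarrow> int"
  assumes "p > 0" "q > 0"
  shows "(\<Sum>t<k. real_of_int (g t) / (real p / real q) ^ t) * real p ^ k
         = real_of_int (\<Sum>t<k. g t * int q ^ t * int p ^ (k - t))"
proof -
  have "real_of_int (g t) / (real p / real q) ^ t * real p ^ k = real_of_int (g t * int q ^ t * int p ^ (k - t))"
    if "t < k" for t
  proof -
    have "real p ^ k = real p ^ t * real p ^ (k - t)" using that by (simp add: power_add[symmetric])
    then show ?thesis using assms by (simp add: power_divide field_simps)
  qed
  then show ?thesis by (simp add: sum_distrib_right)
qed

lemma final_arith:
  fixes p q k l :: nat and P C y x0 :: real and P' C' :: int
  assumes pq: "p > 0" "q > 0"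
    and hP: "P * real p ^ k = real_of_int P'" and hC: "C * real p ^ l = real_of_int C'"
    and hy: "y = C + y / (real p / real q) ^ l" and hx: "x0 = P + y / (real p / real q) ^ k"
  shows "x0 * (real p ^ k * (real p ^ l - real q ^ l)) = real_of_int P' * (real p ^ l - real q ^ l) + real_of_int C' * real q ^ k"
proof -
  have pl: "real p ^ l > 0" "real q ^ l > 0" "real p ^ k > 0" "real q ^ k > 0" using pq by auto
  from hy have "y * real p ^ l = C * real p ^ l + y * real q ^ l"
    using pl by (simp add: power_divide field_simps)
  then have y1: "y * (real p ^ l - real q ^ l) = real_of_int C'" using hC by (simp add: algebra_simps)
  from hx have x1: "x0 * real p ^ k = real_of_int P' + y * real q ^ k"
    using pl hP by (simp add: power_divide field_simps)
  have "x0 * (real p ^ k * (real p ^ l - real q ^ l)) = (x0 * real p ^ k) * (real p ^ l - real q ^ l)" by simp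
  also have "\<dots> = real_of_int P' * (real p ^ l - real q ^ l) + (y * (real p ^ l - real q ^ l)) * real q ^ k"
    unfolding x1 by (simp add: algebra_simps)
  finally show ?thesis unfolding y1 .
qed

lemma pow_diff_mono:
  fixes p q :: nat assumes "q \<le> p" "l \<le> n" "0 < p"
  shows "int p ^ l - int q ^ l \<le> int p ^ n - int q ^ n"
proof -
  have "int p ^ l - int q ^ l \<le> int p ^ (l + m) - int q ^ (l + m)" for m
  proof (induction m)
    case 0 then show ?case by simp
  next
    case (Suc m)
    let ?s = "l + m"
    have a: "int q ^ ?s \<le> int p ^ ?s" using assms by (intro power_mono) auto
    have b: "int q - 1 \<le> int p - 1" "0 \<le> int q ^ ?s" "0 \<le> int p - 1" using assms by auto
    have "(int q - 1) * int q ^ ?s \<le> (int p - 1) * int p ^ ?s"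
      using mult_mono[OF b(1) a b(3) b(2)] .
    then show ?case using Suc by (simp add: algebra_simps)
  qed
  from this[of "n - l"] show ?thesis using assms by simp
qed

theorem corollary1:
  fixes V V0 :: "'v set" and vinit :: 'v and E :: "('v \<times> 'v) set"
    and \<gamma> :: "'v \<times> 'v \<Rightarrow> int" and p q :: nat
  assumes "graph_game V V0 vinit E"
    and "p > 0" and "q > 0" and "real p / real q > 1"
  shows "convergent (\<lambda>k. wt V0 E \<gamma> (real p / real q) k vinit) \<and>
         (\<exists>a b :: int. b > 0 \<and> b \<le> (int p ^ card V - int q ^ card V) * int p ^ card V \<and>
            optimal_cost V0 vinit E \<gamma> (real p / real q) = real_of_int a / real_of_int b)"
proof -
  define D where "D = real p / real q"
  have gg: "graph_game V V0 vinit E" and p: "p > 0" and q: "q > 0" and D: "D > 1"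
    using assms by (auto simp: D_def)
  have qp: "q < p" using assms(4) q by (simp add: field_simps)
  have vi: "vinit \<in> V" and fin: "finite V" and EV: "E \<subseteq> V \<times> V"
    using gg unfolding graph_game_def by auto
  define x where "x = (\<lambda>v. lim (\<lambda>k. wt V0 E \<gamma> D k v))"
  have conv: "convergent (\<lambda>k. wt V0 E \<gamma> D k vinit)" by (rule wt_conv[OF gg D vi])
  have "\<forall>v\<in>V. \<exists>w. (v, w) \<in> E \<and> x v = real_of_int (\<gamma> (v, w)) + x w / D"
    using choose_succ[OF gg _ fixpoint[OF gg D x_def]] by blast
  then have "\<exists>\<sigma>. \<forall>v\<in>V. (v, \<sigma> v) \<in> E \<and> x v = real_of_int (\<gamma> (v, \<sigma> v)) + x (\<sigma> v) / D"
    by (rule bchoice)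
  then obtain \<sigma> where \<sigma>: "\<forall>v\<in>V. (v, \<sigma> v) \<in> E \<and> x v = real_of_int (\<gamma> (v, \<sigma> v)) + x (\<sigma> v) / D"
    by blast
  then have sig: "\<forall>v\<in>V. (v, \<sigma> v) \<in> E \<and> \<sigma> v \<in> V \<and> x v = real_of_int (\<gamma> (v, \<sigma> v)) + x (\<sigma> v) / D"
    using EV by auto
  have Dnz: "D \<noteq> 0" using D by simp
  note pth = path[OF sig _ Dnz]
  define u where "u i = (\<sigma> ^^ i) vinit" for i
  define n where "n = card V"
  have "u ` {..n} \<subseteq> V" using pth[OF vi] unfolding u_def by auto
  then have "card (u ` {..n}) \<le> card V" using fin by (rule card_mono[rotated])
  then have "\<not> inj_on u {..n}" unfolding n_def by (intro pigeonhole) simp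
  then obtain i j where ij: "i \<le> n" "j \<le> n" "i \<noteq> j" "u i = u j" unfolding inj_on_def by auto
  have "\<exists>k j. k < j \<and> j \<le> n \<and> u k = u j"
  proof (cases "i < j")
    case True then show ?thesis using ij by blast
  next
    case False then have "j < i" using ij(3) by simp
    then show ?thesis using ij by (intro exI[of _ j] exI[of _ i]) simp
  qed
  then obtain k j where kj: "k < j" "j \<le> n" "u k = u j" by blast
  define l where "l = j - k"
  have l: "l > 0" "k + l \<le> n" "l \<le> n" "k \<le> n" using kj by (auto simp: l_def)
  have uk: "u k \<in> V" using pth[OF vi] unfolding u_def by blast
  have e1: "x vinit = (\<Sum>t<k. real_of_int (\<gamma> ((\<sigma> ^^ t) vinit, (\<sigma> ^^ Suc t) vinit)) / D ^ t) + x (u k) / D ^ k"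
    using pth[OF vi, of k] unfolding u_def by blast
  have "(\<sigma> ^^ l) (u k) = u j" unfolding u_def l_def using kj
    by (metis funpow_add comp_apply le_add_diff_inverse2 less_imp_le)
  then have e2: "x (u k) = (\<Sum>t<l. real_of_int (\<gamma> ((\<sigma> ^^ t) (u k), (\<sigma> ^^ Suc t) (u k))) / D ^ t) + x (u k) / D ^ l"
    using pth[OF uk, of l] kj by simp
  obtain P' where hP: "(\<Sum>t<k. real_of_int (\<gamma> ((\<sigma> ^^ t) vinit, (\<sigma> ^^ Suc t) vinit)) / D ^ t) * real p ^ k = real_of_int P'"
    using rat_sum[OF p q, where k=k and g="\<lambda>t. \<gamma> ((\<sigma> ^^ t) vinit, (\<sigma> ^^ Suc t) vinit)"] unfolding D_def by blast
  obtain C' where hC: "(\<Sum>t<l. real_of_int (\<gamma> ((\<sigma> ^^ t) (u k), (\<sigma> ^^ Suc t) (u k))) / D ^ t) * real p ^ l = real_of_int C'"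
    using rat_sum[OF p q, where k=l and g="\<lambda>t. \<gamma> ((\<sigma> ^^ t) (u k), (\<sigma> ^^ Suc t) (u k))"] unfolding D_def by blast
  have fa: "x vinit * (real p ^ k * (real p ^ l - real q ^ l)) = real_of_int P' * (real p ^ l - real q ^ l) + real_of_int C' * real q ^ k"
    by (rule final_arith[OF p q hP[unfolded D_def] hC[unfolded D_def] e2[unfolded D_def] e1[unfolded D_def]])
  define a where "a = P' * (int p ^ l - int q ^ l) + C' * int q ^ k"
  define b where "b = int p ^ k * (int p ^ l - int q ^ l)"
  have lt: "int q ^ l < int p ^ l" using qp l by (intro power_strict_mono) auto
  have bpos: "b > 0" unfolding b_def using lt p by simp
  have "int p ^ l - int q ^ l \<le> int p ^ card V - int q ^ card V"
    using pow_diff_mono[of q p l n] qp l n_def p by simp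
  moreover have "int p ^ k \<le> int p ^ card V" using p l n_def by (intro power_increasing) auto
  ultimately have bb: "b \<le> (int p ^ card V - int q ^ card V) * int p ^ card V"
    unfolding b_def using lt by (simp add: mult.commute mult_mono)
  have "x vinit * real_of_int b = real_of_int a" using fa unfolding a_def b_def by simp
  then have "x vinit = real_of_int a / real_of_int b" using bpos by (simp add: field_simps)
  moreover have "optimal_cost V0 vinit E \<gamma> (real p / real q) = x vinit"
    unfolding optimal_cost_def x_def D_def by simp
  ultimately show ?thesis using conv bpos bb unfolding D_def by auto
qed

end
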